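(* Let $\mathcal{X}_V,\mathcal{X}_L$ be finite sets, $\mathcal{P}_M$ a joint distribution on $\mathcal{X}_V\times\mathcal{X}_L$ with everywhere positive marginals $\mathcal{P}_V,\mathcal{P}_L$, and let each sample $x$ have a ground-truth label $y(x)$. Let $\alpha=\mathbb{E}_{(x_v,x_l)\sim\mathcal{P}_M}\mathbb{1}[y(x_v)\ne y(x_l)]$, let $\mathcal{P}_T(x_v,x_v')=\mathbb{E}_{x_l\sim\mathcal{P}_L}\mathcal{P}_M(x_v|x_l)\mathcal{P}_M(x_v'|x_l)$ with $\mathcal{P}_M(x_v|x_l)=\mathcal{P}_M(x_v,x_l)/\mathcal{P}_L(x_l)$, and define $\alpha_T=\sum_{x_v,x_v'\in\mathcal{X}_V}\mathcal{P}_T(x_v,x_v')\,\mathbb{1}[y(x_v)\ne y(x_v')]$. Then $\alpha\ge\frac12\alpha_T$. *)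

theory Defs
  imports Main "HOL-Library.Indicator_Function"
begin

definition is_joint_dist :: "('v::finite \<Rightarrow> 'l::finite \<Rightarrow> real) \<Rightarrow> bool" where
  "is_joint_dist PM \<longleftrightarrow> (\<forall>v l. PM v l \<ge> 0) \<and> (\<Sum>v\<in>UNIV. \<Sum>l\<in>UNIV. PM v l) = 1"

definition marg_V :: "('v \<Rightarrow> 'l::finite \<Rightarrow> real) \<Rightarrow> 'v \<Rightarrow> real" where
  "marg_V PM v = (\<Sum>l\<in>UNIV. PM v l)"

definition marg_L :: "('v::finite \<Rightarrow> 'l \<Rightarrow> real) \<Rightarrow> 'l \<Rightarrow> real" where
  "marg_L PM l = (\<Sum>v\<in>UNIV. PM v l)"

definition cond_V :: "('v::finite \<Rightarrow> 'l \<Rightarrow> real) \<Rightarrow> 'v \<Rightarrow> 'l \<Rightarrow> real" where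
  "cond_V PM v l = PM v l / marg_L PM l"

definition alpha :: "('v::finite \<Rightarrow> 'l::finite \<Rightarrow> real) \<Rightarrow> ('v \<Rightarrow> 'c) \<Rightarrow> ('l \<Rightarrow> 'c) \<Rightarrow> real" where
  "alpha PM yV yL = (\<Sum>v\<in>UNIV. \<Sum>l\<in>UNIV. PM v l * (if yV v \<noteq> yL l then 1 else 0))"

definition P_T :: "('v::finite \<Rightarrow> 'l::finite \<Rightarrow> real) \<Rightarrow> 'v \<Rightarrow> 'v \<Rightarrow> real" where
  "P_T PM v v' = (\<Sum>l\<in>UNIV. marg_L PM l * (cond_V PM v l * cond_V PM v' l))"

definition alpha_T :: "('v::finite \<Rightarrow> 'l::finite \<Rightarrow> real) \<Rightarrow> ('v \<Rightarrow> 'c) \<Rightarrow> real" where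
  "alpha_T PM yV = (\<Sum>v\<in>UNIV. \<Sum>v'\<in>UNIV. P_T PM v v' * (if yV v \<noteq> yV v' then 1 else 0))"

end

theory Submission
  imports Defs
begin

lemma inner_bound:
  fixes PM :: "'v::finite \<Rightarrow> 'l::finite \<Rightarrow> real"
  assumes nn: "\<And>v l. PM v l \<ge> 0"
  shows "(\<Sum>v\<in>UNIV. \<Sum>v'\<in>UNIV. PM v l * PM v' l * (if yV v \<noteq> yV v' then 1 else 0))
     \<le> 2 * marg_L PM l * (\<Sum>v\<in>UNIV. PM v l * (if yV v \<noteq> yL l then 1 else 0))"
proof -
  have "(\<Sum>v\<in>UNIV. \<Sum>v'\<in>UNIV. PM v l * PM v' l * (if yV v \<noteq> yV v' then 1 else 0))
    \<le> (\<Sum>v\<in>UNIV. \<Sum>v'\<in>UNIV. PM v l * PM v' l * ((if yV v \<noteq> yL l then 1 else 0) + (if yV v' \<noteq> yL l then 1 else 0)))"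
    apply (intro sum_mono)
    apply (rule mult_left_mono)
    using nn by (auto intro: mult_nonneg_nonneg)
  also have "\<dots> = (\<Sum>v\<in>UNIV. \<Sum>v'\<in>UNIV. PM v' l * (PM v l * (if yV v \<noteq> yL l then 1 else 0)))
      + (\<Sum>v\<in>UNIV. \<Sum>v'\<in>UNIV. PM v l * (PM v' l * (if yV v' \<noteq> yL l then 1 else 0)))"
    by (simp add: algebra_simps sum.distrib)
  also have "\<dots> = 2 * marg_L PM l * (\<Sum>v\<in>UNIV. PM v l * (if yV v \<noteq> yL l then 1 else 0))"
  proof -
    have a: "(\<Sum>v\<in>UNIV. \<Sum>v'\<in>UNIV. PM v' l * (PM v l * (if yV v \<noteq> yL l then 1 else 0)))
      = marg_L PM l * (\<Sum>v\<in>UNIV. PM v l * (if yV v \<noteq> yL l then 1 else 0))"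
      unfolding marg_L_def sum_distrib_right sum_distrib_left by (rule sum.cong[OF refl], rule sum.cong[OF refl], simp add: ac_simps)
    have b: "(\<Sum>v\<in>UNIV. \<Sum>v'\<in>UNIV. PM v l * (PM v' l * (if yV v' \<noteq> yL l then 1 else 0)))
      = marg_L PM l * (\<Sum>v\<in>UNIV. PM v l * (if yV v \<noteq> yL l then 1 else 0))"
      unfolding marg_L_def sum_distrib_right sum_distrib_left by (subst sum.swap, rule sum.cong[OF refl], rule sum.cong[OF refl], simp add: ac_simps)
    show ?thesis unfolding a b by simp
  qed
  finally show ?thesis .
qed

theorem propositionA1:
  fixes PM :: "'v::finite \<Rightarrow> 'l::finite \<Rightarrow> real"
    and yV :: "'v \<Rightarrow> 'c" and yL :: "'l \<Rightarrow> 'c"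
  assumes "is_joint_dist PM"
    and "\<And>v. marg_V PM v > 0"
    and "\<And>l. marg_L PM l > 0"
  shows "alpha PM yV yL \<ge> alpha_T PM yV / 2"
proof -
  have nn: "\<And>v l. PM v l \<ge> 0" using assms(1) unfolding is_joint_dist_def by auto
  have "alpha_T PM yV = (\<Sum>v\<in>UNIV. \<Sum>v'\<in>UNIV. \<Sum>l\<in>UNIV.
      (PM v l * PM v' l * (if yV v \<noteq> yV v' then 1 else 0)) / marg_L PM l)"
    unfolding alpha_T_def P_T_def cond_V_def
    apply (intro sum.cong refl)
    apply (simp add: sum_distrib_right)
    apply (intro impI sum.cong refl)
    using assms(3) by (simp add: field_simps power2_eq_square)
  also have "\<dots> = (\<Sum>l\<in>UNIV. (\<Sum>v\<in>UNIV. \<Sum>v'\<in>UNIV.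
      PM v l * PM v' l * (if yV v \<noteq> yV v' then 1 else 0)) / marg_L PM l)"
    unfolding sum_divide_distrib by (subst sum.swap, rule sum.cong[OF refl], subst sum.swap, rule refl)
  also have "\<dots> \<le> (\<Sum>l\<in>UNIV. 2 * (\<Sum>v\<in>UNIV. PM v l * (if yV v \<noteq> yL l then 1 else 0)))"
  proof (rule sum_mono)
    fix l
    have p: "marg_L PM l > 0" using assms(3) by auto
    show "(\<Sum>v\<in>UNIV. \<Sum>v'\<in>UNIV.
      PM v l * PM v' l * (if yV v \<noteq> yV v' then 1 else 0)) / marg_L PM l
      \<le> 2 * (\<Sum>v\<in>UNIV. PM v l * (if yV v \<noteq> yL l then 1 else 0))"
      using inner_bound[where PM=PM and l=l and yV=yV and yL=yL, OF nn] p by (simp add: divide_le_eq mult_ac)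
  qed
  also have "\<dots> = 2 * alpha PM yV yL"
    unfolding alpha_def sum_distrib_left by (subst sum.swap, rule refl)
  finally show ?thesis by simp
qed

end
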